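(* Let $n\ge 2$ and let $A_1,\dots,A_n$ be points in the plane lying on a circle $T$ with centre $O$. Let $\Gamma$ be a circle with centre $O$, and let $k$ be a positive integer with $k>\lfloor n/2\rfloor$. If $\sum_{i=1}^n |XA_i|^{2k}$ does not depend on the position of $X\in\Gamma$, then $A_1,\dots,A_n$ are the vertices of a regular $n$-gon (inscribed in $T$).
   Context: $|XA|$ denotes Euclidean distance; $\lfloor\cdot\rfloor$ is the integer part. *)

theory Defs
  imports Complex_Main
begin

definition regular_ngon :: "nat \<Rightarrow> complex \<Rightarrow> real \<Rightarrow> (nat \<Rightarrow> complex) \<Rightarrow> bool" where
  "regular_ngon n Oc r A \<longleftrightarrow>
     (\<exists>\<theta>::real. \<exists>\<sigma>::nat \<Rightarrow> nat. bij_betw \<sigma> {1..n} {1..n} \<and>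
        (\<forall>i\<in>{1..n}. A i = Oc + complex_of_real r * cis (\<theta> + 2 * pi * real (\<sigma> i) / real n)))"

end

theory Submission imports Defs "HOL-Computational_Algebra.Polynomial" begin
lemma coeff3_mult:
  fixes a b c :: "'a::comm_ring_1"
  shows "coeff ([:a,b,c:] * P) j = a * coeff P j + (if j \<ge> 1 then b * coeff P (j-1) else 0)
        + (if j \<ge> 2 then c * coeff P (j-2) else 0)"
proof (cases j)
  case 0 then show ?thesis by (simp add: mult_pCons_left)
next
  case (Suc j')
  then show ?thesis by (cases j') (simp_all add: mult_pCons_left)
qed

lemma Npos:
  fixes a b :: real
  assumes "a > 0" "b > 0"
  shows "\<forall>j. coeff ([:a,b,a:]^k) j \<ge> 0 \<and> (j \<le> 2*k \<longrightarrow> coeff ([:a,b,a:]^k) j > 0)"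
proof (induction k)
  case 0
  then show ?case by (simp add: coeff_1)
next
  case (Suc k)
  show ?case
  proof
    fix j
    let ?P = "[:a,b,a:]^k"
    have e: "coeff ([:a,b,a:]^Suc k) j = a * coeff ?P j + (if j \<ge> 1 then b * coeff ?P (j-1) else 0)
        + (if j \<ge> 2 then a * coeff ?P (j-2) else 0)"
      by (simp only: power_Suc coeff3_mult)
    have nn: "\<And>t. coeff ?P t \<ge> 0" using Suc by blast
    have t1: "a * coeff ?P j \<ge> 0" "(if j \<ge> 1 then b * coeff ?P (j-1) else 0) \<ge> 0"
        "(if j \<ge> 2 then a * coeff ?P (j-2) else 0) \<ge> 0"
      using nn assms by auto
    have pos: "j \<le> 2 * Suc k \<Longrightarrow> coeff ([:a,b,a:]^Suc k) j > 0"
    proof -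
      assume j: "j \<le> 2 * Suc k"
      show ?thesis
      proof (cases "j \<le> 2*k")
        case True
        then have "a * coeff ?P j > 0" using Suc assms by simp
        then show ?thesis using e t1 by linarith
      next
        case False
        show ?thesis
        proof (cases "j \<ge> 2")
          case True
          then have "j - 2 \<le> 2*k" using j by auto
          then have "(if j \<ge> 2 then a * coeff ?P (j-2) else 0) > 0" using Suc assms True by simp
          then show ?thesis using e t1 by linarith
        next
          case False2: False
          then have "j = 1" "j - 1 \<le> 2*k" using False by auto
          then have "(if j \<ge> 1 then b * coeff ?P (j-1) else 0) > 0" using Suc assms by simp
          then show ?thesis using e t1 by linarith
        qed
      qed
    qed
    show "coeff ([:a,b,a:]^Suc k) j \<ge> 0 \<and> (j \<le> 2 * Suc k \<longrightarrow> coeff ([:a,b,a:]^Suc k) j > 0)"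
      using e t1 pos by linarith
  qed
qed

lemma Ntransfer:
  fixes a b :: real
  shows "coeff ([:complex_of_real a, of_real b, of_real a:]^k) j = of_real (coeff ([:a,b,a:]^k) j)"
proof (induction k arbitrary: j)
  case 0
  then show ?case by (simp add: coeff_1)
next
  case (Suc k)
  show ?case
    by (simp only: power_Suc coeff3_mult Suc) simp
qed

lemma circle_infinite: "infinite {z::complex. cmod z = 1}"
proof -
  define f where "f n = Complex (1/(real n+1)) (sqrt (1 - (1/(real n+1))^2))" for n
  have "inj f"
    by (rule injI) (auto simp: f_def)
  moreover have "range f \<subseteq> {z. cmod z = 1}"
  proof
    fix z assume "z \<in> range f"
    then obtain n where z: "z = f n" by auto
    have le: "(1/(real n+1))^2 \<le> 1" by (simp add: power_le_one)
    show "z \<in> {z. cmod z = 1}" using le by (simp add: z f_def cmod_def)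
  qed
  ultimately show ?thesis
    using range_inj_infinite infinite_super by blast
qed

lemma powersums:
  fixes w :: "nat \<Rightarrow> complex" and \<rho> r c :: real
  assumes w1: "\<forall>i\<in>{1..n}. cmod (w i) = 1" and pos: "\<rho> > 0" "r > 0"
    and const: "\<forall>z. cmod z = 1 \<longrightarrow> (\<Sum>i=1..n. cmod (of_real \<rho> * z - of_real r * w i) ^ (2*k)) = c"
    and m: "m \<in> {1..k}"
  shows "(\<Sum>i=1..n. w i ^ m) = 0"
proof -
  define a where "a = \<rho> * r"
  define b where "b = \<rho>^2 + r^2"
  have ab: "a > 0" "b > 0" using pos by (auto simp: a_def b_def add_pos_pos)
  define Nc where "Nc = [:complex_of_real a, of_real b, of_real a:]"
  define \<nu> where "\<nu> j = coeff ([:a,b,a:]^k) j" for j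
  have cNc: "coeff (Nc^k) j = of_real (\<nu> j)" for j
    unfolding Nc_def \<nu>_def by (rule Ntransfer)
  have degNc: "degree (Nc^k) = 2*k"
  proof -
    have "Nc \<noteq> 0" "degree Nc = 2" using ab by (auto simp: Nc_def)
    then show ?thesis by (simp add: degree_power_eq)
  qed
  have wnz: "w i \<noteq> 0" if "i \<in> {1..n}" for i using w1 that by (metis norm_zero zero_neq_one)
  have cw: "cnj (w i) = 1 / w i" if "i \<in> {1..n}" for i
  proof -
    have "w i * cnj (w i) = 1" using complex_norm_square[of "w i"] w1 that by simp
    then show ?thesis using wnz[OF that] by (simp add: field_simps)
  qed
  define g where "g j = of_real (\<nu> j) * (-1)^(k+j) * (\<Sum>i=1..n. w i ^ k / w i ^ j)" for j
  have key: "complex_of_real c * z^k = (\<Sum>j\<le>2*k. g j * z^j)" if z: "cmod z = 1" for z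
  proof -
    have znz: "z \<noteq> 0" using z by auto
    have cz: "cnj z = 1 / z"
    proof -
      have "z * cnj z = 1" using complex_norm_square[of z] z by simp
      then show ?thesis using znz by (simp add: field_simps)
    qed
    have trm: "complex_of_real (cmod (of_real \<rho> * z - of_real r * w i) ^ (2*k))
        = (-w i)^k / z^k * (\<Sum>j\<le>2*k. of_real (\<nu> j) * (-z / w i)^j)" if i: "i \<in> {1..n}" for i
    proof -
      let ?v = "of_real \<rho> * z - of_real r * w i"
      have "complex_of_real (cmod ?v ^ (2*k)) = (complex_of_real ((cmod ?v)^2))^k"
        by (simp add: power_mult)
      also have "complex_of_real ((cmod ?v)^2) = ?v * cnj ?v" by (rule complex_norm_square)
      also have "cnj ?v = of_real \<rho> / z - of_real r / w i"
        by (simp add: cz cw[OF i])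
      also have "?v * (of_real \<rho> / z - of_real r / w i) = (-w i / z) * poly Nc (-z / w i)"
        using znz wnz[OF i]
        by (simp add: Nc_def a_def b_def field_simps power2_eq_square)
      also have "((-w i / z) * poly Nc (-z / w i))^k = (-w i)^k / z^k * poly (Nc^k) (-z / w i)"
        by (simp only: power_mult_distrib power_divide poly_power)
      also have "poly (Nc^k) (-z / w i) = (\<Sum>j\<le>2*k. of_real (\<nu> j) * (-z / w i)^j)"
        by (simp add: poly_altdef degNc cNc)
      finally show ?thesis .
    qed
    have "complex_of_real c = complex_of_real (\<Sum>i=1..n. cmod (of_real \<rho> * z - of_real r * w i) ^ (2*k))"
      using const z by simp
    also have "\<dots> = (\<Sum>i=1..n. (-w i)^k / z^k * (\<Sum>j\<le>2*k. of_real (\<nu> j) * (-z / w i)^j))"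
      unfolding of_real_sum by (rule sum.cong[OF refl], rule trm, assumption)
    finally have e: "complex_of_real c = (\<Sum>i=1..n. (-w i)^k / z^k * (\<Sum>j\<le>2*k. of_real (\<nu> j) * (-z / w i)^j))" .
    have "complex_of_real c * z^k = (\<Sum>i=1..n. (-w i)^k * (\<Sum>j\<le>2*k. of_real (\<nu> j) * (-z / w i)^j))"
      unfolding e sum_distrib_right
      by (rule sum.cong[OF refl]) (use znz in simp)
    also have "\<dots> = (\<Sum>i=1..n. \<Sum>j\<le>2*k. of_real (\<nu> j) * (-1)^(k+j) * (w i ^ k / w i ^ j) * z^j)"
    proof (rule sum.cong[OF refl])
      fix i assume i: "i \<in> {1..n}"
      show "(-w i)^k * (\<Sum>j\<le>2*k. of_real (\<nu> j) * (-z / w i)^j)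
          = (\<Sum>j\<le>2*k. of_real (\<nu> j) * (-1)^(k+j) * (w i ^ k / w i ^ j) * z^j)"
        unfolding sum_distrib_left
      proof (rule sum.cong[OF refl])
        fix j
        have "(-w i)^k = (-1)^k * w i ^ k" by (rule power_minus)
        moreover have "(-z / w i)^j = (-1)^j * z^j / w i ^ j" by (simp only: power_divide power_minus[of z])
        ultimately show "(-w i)^k * (of_real (\<nu> j) * (-z / w i)^j) = of_real (\<nu> j) * (-1)^(k+j) * (w i ^ k / w i ^ j) * z^j"
          by (simp only: power_add times_divide_eq_right times_divide_eq_left mult_ac)
      qed
    qed
    also have "\<dots> = (\<Sum>j\<le>2*k. g j * z^j)"
      unfolding g_def sum.swap[of _ "{1..n}"] sum_distrib_left sum_distrib_right
      by (rule sum.cong[OF refl], rule sum.cong[OF refl]) (simp only: mult_ac)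
    finally show ?thesis .
  qed
  define F where "F = (\<Sum>j\<le>2*k. monom (g j) j) - monom (complex_of_real c) k"
  have sub: "{z. cmod z = 1} \<subseteq> {z. poly F z = 0}"
    using key by (auto simp: F_def poly_sum poly_monom)
  have "F = 0"
  proof (rule ccontr)
    assume "F \<noteq> 0"
    then have "finite {z. poly F z = 0}" by (rule poly_roots_finite)
    then have "finite {z::complex. cmod z = 1}" using finite_subset[OF sub] by blast
    then show False using circle_infinite by blast
  qed
  then have "coeff F (k - m) = 0" by simp
  moreover have "coeff F (k - m) = g (k - m)"
    using m by (auto simp: F_def coeff_sum)
  ultimately have g0: "g (k - m) = 0" by simp
  have "\<nu> (k - m) > 0" using Npos[OF ab, of k] unfolding \<nu>_def by simp
  moreover have "(\<Sum>i=1..n. w i ^ k / w i ^ (k - m)) = (\<Sum>i=1..n. w i ^ m)"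
  proof (rule sum.cong[OF refl])
    fix i assume i: "i \<in> {1..n}"
    have "w i ^ k = w i ^ (k - m) * w i ^ m" using m by (simp flip: power_add)
    then show "w i ^ k / w i ^ (k - m) = w i ^ m" using wnz[OF i] by simp
  qed
  ultimately show ?thesis using g0 by (simp add: g_def)
qed

lemma newton_top:
  fixes w :: "nat \<Rightarrow> complex"
  assumes ps: "\<forall>m\<in>{1..k}. (\<Sum>i=1..n. w i ^ m) = 0"
    and s: "n - k \<le> s" "0 < s" "s < n"
  shows "coeff (\<Prod>i=1..n. [:- w i, 1:]) s = 0"
proof -
  define q where "q = (\<Prod>i=1..n. [:- w i, 1:])"
  define r where "r i = (\<Prod>l\<in>{1..n}-{i}. [:- w l, 1:])" for i
  have degq: "degree q \<le> n"
    unfolding q_def using degree_prod_sum_le[of "{1..n}" "\<lambda>i. [:- w i, 1:]"] by simp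
  have degr: "degree (r i) < n" if "i \<in> {1..n}" for i
  proof -
    have "degree (r i) \<le> card ({1..n}-{i})"
      unfolding r_def using degree_prod_sum_le[of "{1..n}-{i}" "\<lambda>i. [:- w i, 1:]"] by simp
    also have "\<dots> < n" using that by simp
    finally show ?thesis .
  qed
  have qr: "q = [:- w i, 1:] * r i" if "i \<in> {1..n}" for i
    unfolding q_def r_def using that by (simp add: prod.remove)
  have rec: "coeff (r i) m = coeff q (Suc m) + w i * coeff (r i) (Suc m)" if "i \<in> {1..n}" for i m
    using qr[OF that] by (simp add: mult_pCons_left)
  have formula: "coeff (r i) m = (\<Sum>j=Suc m..n. coeff q j * w i ^ (j - Suc m))"
    if i: "i \<in> {1..n}" for i m
  proof (induction "n - m" arbitrary: m rule: less_induct)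
    case less
    show ?case
    proof (cases "n \<le> m")
      case True
      then have "coeff (r i) m = 0" using degr[OF i] by (simp add: coeff_eq_0)
      then show ?thesis using True by simp
    next
      case False
      then have IH: "coeff (r i) (Suc m) = (\<Sum>j=Suc (Suc m)..n. coeff q j * w i ^ (j - Suc (Suc m)))"
        using less by simp
      have "(\<Sum>j=Suc m..n. coeff q j * w i ^ (j - Suc m))
          = coeff q (Suc m) + (\<Sum>j=Suc (Suc m)..n. coeff q j * w i ^ (j - Suc m))"
        using False by (simp add: sum.atLeast_Suc_atMost)
      also have "(\<Sum>j=Suc (Suc m)..n. coeff q j * w i ^ (j - Suc m))
          = w i * (\<Sum>j=Suc (Suc m)..n. coeff q j * w i ^ (j - Suc (Suc m)))"
        unfolding sum_distrib_left
      proof (rule sum.cong)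
        fix x assume "x \<in> {Suc (Suc m)..n}"
        then have "x - Suc m = Suc (x - Suc (Suc m))" by auto
        then show "coeff q x * w i ^ (x - Suc m) = w i * (coeff q x * w i ^ (x - Suc (Suc m)))"
          by (simp add: algebra_simps)
      qed simp
      finally show ?thesis using rec[OF i, of m] IH by simp
    qed
  qed
  have pd: "pderiv q = (\<Sum>i=1..n. r i)"
    by (simp add: q_def r_def pderiv_prod pderiv_pCons)
  obtain m where m: "s = Suc m" using s by (cases s) auto
  have "of_nat s * coeff q s = coeff (pderiv q) m"
    by (simp add: coeff_pderiv m)
  also have "\<dots> = (\<Sum>i=1..n. \<Sum>j=s..n. coeff q j * w i ^ (j - s))"
    by (simp add: pd coeff_sum formula m)
  also have "\<dots> = (\<Sum>j=s..n. coeff q j * (\<Sum>i=1..n. w i ^ (j - s)))"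
    unfolding sum_distrib_left by (rule sum.swap)
  also have "\<dots> = coeff q s * (\<Sum>i=1..n. w i ^ (s - s)) + (\<Sum>j=Suc s..n. coeff q j * (\<Sum>i=1..n. w i ^ (j - s)))"
    using s by (simp add: sum.atLeast_Suc_atMost)
  also have "(\<Sum>j=Suc s..n. coeff q j * (\<Sum>i=1..n. w i ^ (j - s))) = 0"
  proof (rule sum.neutral, rule ballI)
    fix j assume j: "j \<in> {Suc s..n}"
    then have "j - s \<in> {1..k}" using s by auto
    then show "coeff q j * (\<Sum>i=1..n. w i ^ (j - s)) = 0" using ps by simp
  qed
  finally have "of_nat s * coeff q s = of_nat n * coeff q s" by simp
  then have "(of_nat s - of_nat n) * coeff q s = 0" by (simp add: algebra_simps)
  moreover have "(of_nat s :: complex) \<noteq> of_nat n" using s by simp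
  ultimately show ?thesis unfolding q_def by simp
qed


lemma prod_smult_poly:
  fixes f :: "nat \<Rightarrow> 'a::comm_ring_1" and g :: "nat \<Rightarrow> 'a poly"
  shows "(\<Prod>i\<in>S. smult (f i) (g i)) = smult (\<Prod>i\<in>S. f i) (\<Prod>i\<in>S. g i)"
  by (induction S rule: infinite_finite_induct) (simp_all add: mult_ac)

lemma reflect_lin: "reflect_poly [:- (w::complex), 1:] = [:1, - w:]"
  by (rule poly_eqI) (auto simp: coeff_reflect_poly coeff_pCons split: nat.split)

theorem proposition2p2:
  fixes n k :: nat and A :: "nat \<Rightarrow> complex" and Oc :: complex and r \<rho> :: real
  assumes "n \<ge> 2"
    and "r > 0" and "\<forall>i\<in>{1..n}. cmod (A i - Oc) = r"
    and "\<rho> > 0"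
    and "k > 0" and "int k > \<lfloor>real n / 2\<rfloor>"
    and "\<exists>c::real. \<forall>X. cmod (X - Oc) = \<rho> \<longrightarrow> (\<Sum>i=1..n. (cmod (X - A i)) ^ (2 * k)) = c"
  shows "regular_ngon n Oc r A"
proof -
  note n2 = assms(1) and rpos = assms(2) and onT = assms(3) and rhopos = assms(4)
  have nk: "n < 2 * k"
  proof -
    have "real n / 2 < of_int \<lfloor>real n / 2\<rfloor> + 1" by linarith
    also have "of_int \<lfloor>real n / 2\<rfloor> + 1 \<le> real k" using assms(6) by linarith
    finally show ?thesis by linarith
  qed
  define w where "w i = (A i - Oc) / complex_of_real r" for i
  have rnz: "complex_of_real r \<noteq> 0" using rpos by simp
  have w1: "\<forall>i\<in>{1..n}. cmod (w i) = 1"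
    using onT rpos by (simp add: w_def norm_divide)
  have wnz: "w i \<noteq> 0" if "i \<in> {1..n}" for i using w1 that by (metis norm_zero zero_neq_one)
  have Aw: "A i = Oc + complex_of_real r * w i" for i
    using rnz by (simp add: w_def)
  obtain c :: real where c: "\<forall>X. cmod (X - Oc) = \<rho> \<longrightarrow> (\<Sum>i=1..n. (cmod (X - A i)) ^ (2 * k)) = c"
    using assms(7) by blast
  have const: "\<forall>z. cmod z = 1 \<longrightarrow> (\<Sum>i=1..n. cmod (of_real \<rho> * z - of_real r * w i) ^ (2*k)) = c"
  proof (intro allI impI)
    fix z :: complex assume z: "cmod z = 1"
    have "cmod ((Oc + of_real \<rho> * z) - Oc) = \<rho>" using z rhopos by (simp add: norm_mult)
    then have "(\<Sum>i=1..n. (cmod ((Oc + of_real \<rho> * z) - A i)) ^ (2 * k)) = c" using c by blast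
    moreover have "(Oc + of_real \<rho> * z) - A i = of_real \<rho> * z - of_real r * w i" for i
      by (simp add: Aw)
    ultimately show "(\<Sum>i=1..n. cmod (of_real \<rho> * z - of_real r * w i) ^ (2*k)) = c" by simp
  qed
  have ps: "\<forall>m\<in>{1..k}. (\<Sum>i=1..n. w i ^ m) = 0"
    using powersums[OF w1 rhopos rpos const] by blast
  have psc: "\<forall>m\<in>{1..k}. (\<Sum>i=1..n. cnj (w i) ^ m) = 0"
  proof
    fix m assume "m \<in> {1..k}"
    then have "cnj (\<Sum>i=1..n. w i ^ m) = 0" using ps by simp
    then show "(\<Sum>i=1..n. cnj (w i) ^ m) = 0" by simp
  qed
  define q where "q = (\<Prod>i=1..n. [:- w i, 1:])"
  define qc where "qc = (\<Prod>i=1..n. [:- cnj (w i), 1:])"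
  have Nq: "coeff q s = 0" if "n - k \<le> s" "0 < s" "s < n" for s
    unfolding q_def by (rule newton_top[OF ps that])
  have Nqc: "coeff qc s = 0" if "n - k \<le> s" "0 < s" "s < n" for s
    unfolding qc_def by (rule newton_top[OF psc that])
  have degq: "degree q = n"
    unfolding q_def by (subst degree_prod_eq_sum_degree) auto
  have leadq: "coeff q n = 1"
    using lead_coeff_prod[of "\<lambda>i. [:- w i, 1:]" "{1..n}"] degq by (simp add: q_def)
  define U where "U = (\<Prod>i=1..n. - w i)"
  have refl: "reflect_poly q = smult U qc"
  proof -
    have "reflect_poly q = (\<Prod>i=1..n. [:1, - w i:])"
      unfolding q_def reflect_poly_prod reflect_lin ..
    also have "\<dots> = (\<Prod>i=1..n. smult (- w i) [:- cnj (w i), 1:])"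
    proof (rule prod.cong[OF refl])
      fix i assume i: "i \<in> {1..n}"
      have "w i * cnj (w i) = 1" using complex_norm_square[of "w i"] w1 i by simp
      then show "[:1, - w i:] = smult (- w i) [:- cnj (w i), 1:]" by simp
    qed
    also have "\<dots> = smult U qc" unfolding prod_smult_poly U_def qc_def ..
    finally show ?thesis .
  qed
  have qrel: "coeff q (n - t) = U * coeff qc t" if "t \<le> n" for t
  proof -
    have "coeff (reflect_poly q) t = coeff q (n - t)" using that degq by (simp add: coeff_reflect_poly)
    then show ?thesis using refl by simp
  qed
  have zero: "coeff q t = 0" if "0 < t" "t < n" for t
  proof (cases "n - k \<le> t")
    case True then show ?thesis using Nq that by blast
  next
    case False
    then have "coeff qc (n - t) = 0" using that nk by (intro Nqc) auto
    moreover have "coeff q (n - (n - t)) = U * coeff qc (n - t)" using qrel[of "n - t"] by simp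
    ultimately show ?thesis using that by simp
  qed
  have qform: "q = monom 1 n + [:coeff q 0:]"
  proof (rule poly_eqI)
    fix t
    show "coeff q t = coeff (monom 1 n + [:coeff q 0:]) t"
    proof (cases "t = 0")
      case True then show ?thesis using n2 by simp
    next
      case False
      then show ?thesis using zero[of t] leadq degq coeff_eq_0[of q t] n2
        by (cases "t < n"; cases "t = n") (auto simp: coeff_pCons split: nat.split)
    qed
  qed
  have root: "w i ^ n = - coeff q 0" if i: "i \<in> {1..n}" for i
  proof -
    have "poly q (w i) = 0" unfolding q_def poly_prod using i by (auto intro: prod_zero)
    then show ?thesis by (subst (asm) qform) (simp add: poly_monom algebra_simps add_eq_0_iff)
  qed
  have dist: "w i \<noteq> w l" if i: "i \<in> {1..n}" and l: "l \<in> {1..n}" and il: "i \<noteq> l" for i l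
  proof
    assume eq: "w i = w l"
    let ?L = "[:- w i, 1:]"
    define R where "R = (\<Prod>j\<in>{1..n}-{i}-{l}. [:- w j, 1:])"
    have "q = ?L * (\<Prod>j\<in>{1..n}-{i}. [:- w j, 1:])"
      unfolding q_def using i by (simp add: prod.remove)
    also have "(\<Prod>j\<in>{1..n}-{i}. [:- w j, 1:]) = [:- w l, 1:] * R"
      unfolding R_def using l il by (subst prod.remove[of _ l]) auto
    finally have qLR: "q = ?L * (?L * R)" using eq by simp
    have "poly (pderiv q) (w i) = 0"
    proof -
      have L0: "poly ?L (w i) = 0" by simp
      show ?thesis unfolding qLR pderiv_mult poly_add poly_mult L0 by simp
    qed
    moreover have "poly (pderiv q) (w i) = of_nat n * w i ^ (n - 1)"
      by (subst qform) (simp add: pderiv_add pderiv_monom poly_monom)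
    moreover have "of_nat n * w i ^ (n - 1) \<noteq> 0" using n2 wnz[OF i] by simp
    ultimately show False by simp
  qed
  have one: "(1::nat) \<in> {1..n}" using n2 by simp
  define \<theta> where "\<theta> = Arg (w 1)"
  have cth: "cis \<theta> = w 1"
    using cis_Arg[OF wnz[OF one]] w1 one by (simp add: \<theta>_def sgn_eq)
  define u where "u i = w i / w 1" for i
  have un: "u i ^ n = 1" if "i \<in> {1..n}" for i
  proof -
    have "w 1 ^ n \<noteq> 0" using wnz[OF one] by simp
    then have "w i ^ n = w 1 ^ n" "w 1 ^ n \<noteq> 0" using root[OF that] root[OF one] by auto
    then show ?thesis by (simp add: u_def power_divide)
  qed
  have npos: "n > 0" using n2 by simp
  have ex: "\<exists>j. j < n \<and> u i = cis (2 * pi * real j / real n)" if "i \<in> {1..n}" for i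
  proof -
    have "u i \<in> (\<lambda>k. cis (2 * pi * real k / real n)) ` {..<n}"
      using bij_betw_imp_surj_on[OF bij_betw_roots_unity[OF npos]] un[OF that] by blast
    then show ?thesis by auto
  qed
  define \<tau> where "\<tau> i = (SOME j. j < n \<and> u i = cis (2 * pi * real j / real n))" for i
  have \<tau>: "\<tau> i < n \<and> u i = cis (2 * pi * real (\<tau> i) / real n)" if "i \<in> {1..n}" for i
    unfolding \<tau>_def by (rule someI_ex[OF ex[OF that]])
  define \<sigma> where "\<sigma> i = (if \<tau> i = 0 then n else \<tau> i)" for i
  have cs: "cis (2 * pi * real (\<sigma> i) / real n) = u i" if i: "i \<in> {1..n}" for i
  proof (cases "\<tau> i = 0")
    case True
    then show ?thesis using \<tau>[OF i] npos by (simp add: \<sigma>_def)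
  next
    case False
    then show ?thesis using \<tau>[OF i] by (simp add: \<sigma>_def)
  qed
  have \<sigma>range: "\<sigma> i \<in> {1..n}" if "i \<in> {1..n}" for i
    using \<tau>[OF that] by (auto simp: \<sigma>_def)
  have inj: "inj_on \<sigma> {1..n}"
  proof (rule inj_onI)
    fix i l assume i: "i \<in> {1..n}" and l: "l \<in> {1..n}" and e: "\<sigma> i = \<sigma> l"
    then have "u i = u l" using cs[OF i] cs[OF l] by simp
    then have "w i = w l" using wnz[OF one] by (simp add: u_def)
    then show "i = l" using dist[OF i l] by blast
  qed
  have bij: "bij_betw \<sigma> {1..n} {1..n}"
  proof -
    have "\<sigma> ` {1..n} \<subseteq> {1..n}" using \<sigma>range by blast
    then have "\<sigma> ` {1..n} = {1..n}" using inj by (intro endo_inj_surj) auto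
    then show ?thesis unfolding bij_betw_def using inj by blast
  qed
  show ?thesis
    unfolding regular_ngon_def
  proof (intro exI conjI ballI)
    show "bij_betw \<sigma> {1..n} {1..n}" by (rule bij)
  next
    fix i assume i: "i \<in> {1..n}"
    have "w i = w 1 * u i" using wnz[OF one] by (simp add: u_def)
    also have "\<dots> = cis (\<theta> + 2 * pi * real (\<sigma> i) / real n)"
      using cth cs[OF i] by (simp add: cis_mult[symmetric])
    finally show "A i = Oc + complex_of_real r * cis (\<theta> + 2 * pi * real (\<sigma> i) / real n)"
      using Aw by simp
  qed
qed

end
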